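(* Let $k\in\{0,1,-1\}$, let $c\neq0$, $m\ge0$ and $a_1,a_2,a_3$ be real, $\hat a=(a_1,a_2,a_3)^T$, and consider the complex system for $\hat K=(K_1,K_2,K_3)^T$, $\hat P=(P_1,P_2,P_3)^T$ in complex time $t$: $$\frac{d\hat K}{dt}=\hat K\times\omega(\hat K)+\hat P\times\hat a,\qquad \frac{d\hat P}{dt}=\hat P\times\omega(\hat K)+k\,(\hat K\times\hat a),\qquad \omega(\hat K)=\Big(\frac{m}{c}K_1,\frac{m}{c}K_2,\frac1cK_3\Big)^T.$$ Suppose a solution is given near $t=0$ by Laurent series $\hat K(t)=t^{-n_1}(K_0+K_1t+K_2t^2+\cdots)$, $\hat P(t)=t^{-n_2}(P_0+P_1t+\cdots)$ with $n_1,n_2$ positive integers, $K_n,P_n\in\mathbb{C}^3$, $K_0\neq0$, $P_0\neq0$. If $\omega(K_0)\times P_0\neq0$, then $n_1=1$ and $n_2=2$.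
   Context: $\times$ is the (complex bilinear) vector product on $\mathbb{C}^3$. The system is the complexification of the Hamiltonian equations for $H=\frac12\big(\frac{H_1^2}{c_1}+\frac{H_2^2}{c_2}+\frac{H_3^2}{c_3}\big)+a\cdot h$ with $c_1=c_2=c/m$, $c_3=c$ ($m=0$ meaning $1/c_1=1/c_2=0$). *)

theory Defs
  imports "HOL-Analysis.Analysis"
begin

definition cvcross :: "complex^3 \<Rightarrow> complex^3 \<Rightarrow> complex^3" where
  "cvcross u v = (\<chi> i. if i = 1 then u$2 * v$3 - u$3 * v$2
                      else if i = 2 then u$3 * v$1 - u$1 * v$3
                      else u$1 * v$2 - u$2 * v$1)"

definition omega :: "real \<Rightarrow> real \<Rightarrow> complex^3 \<Rightarrow> complex^3" where
  "omega m c K = (\<chi> i. if i = 3 then K$3 / complex_of_real c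
                       else complex_of_real (m / c) * K$i)"

definition cvec :: "real^3 \<Rightarrow> complex^3" where
  "cvec a = (\<chi> i. complex_of_real (a$i))"

definition laurent :: "nat \<Rightarrow> (nat \<Rightarrow> complex^3) \<Rightarrow> complex \<Rightarrow> complex^3" where
  "laurent n X t = (t powi (- int n)) *s (\<Sum>j. (t ^ j) *s X j)"

end

theory Submission
  imports Defs
begin

lemma vec_isCont: fixes h :: "complex \<Rightarrow> complex^3"
  assumes "\<And>i. isCont (\<lambda>t. h t $ i) x" shows "isCont h x"
  using assms unfolding isCont_def by (intro vec_tendstoI) auto

lemma isCont_cvcross: fixes u v :: "complex \<Rightarrow> complex^3" assumes "isCont u x" "isCont v x"
  shows "isCont (\<lambda>t. cvcross (u t) (v t)) x"
proof (rule vec_isCont)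
  fix i :: 3
  show "isCont (\<lambda>t. cvcross (u t) (v t) $ i) x"
    by (cases "i = 1"; cases "i = 2"; cases "i = 3") (simp_all add: cvcross_def assms continuous_intros)
qed

lemma isCont_omega: fixes u :: "complex \<Rightarrow> complex^3" assumes "isCont u x"
  shows "isCont (\<lambda>t. omega m c (u t)) x"
proof (rule vec_isCont)
  fix i :: 3
  show "isCont (\<lambda>t. omega m c (u t) $ i) x"
    by (cases "i = 1"; cases "i = 2"; cases "i = 3") (simp_all add: omega_def assms continuous_intros divide_inverse)
qed

lemma isCont_smult: fixes g :: "complex \<Rightarrow> complex^3"
  assumes "isCont f x" "isCont g x"
  shows "isCont (\<lambda>t. f t *s g t) x"
  by (rule vec_isCont) (simp add: assms continuous_intros)

lemma cvcross_smult_left: "cvcross (a *s u) v = a *s cvcross u v"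
  by (simp add: vec_eq_iff cvcross_def algebra_simps)
lemma cvcross_smult_right: "cvcross u (a *s v) = a *s cvcross u v"
  by (simp add: vec_eq_iff cvcross_def algebra_simps)
lemma omega_smult: "omega m c (a *s u) = a *s omega m c u"
  by (simp add: vec_eq_iff omega_def algebra_simps)
lemma cvcross_anti: "cvcross u v = - cvcross v u"
  by (simp add: vec_eq_iff cvcross_def algebra_simps)
lemma cvcross_zero: "cvcross u (cvec 0) = 0"
  by (simp add: vec_eq_iff cvcross_def cvec_def)

lemma lim_eq: fixes A B :: "complex \<Rightarrow> complex^3"
  assumes "isCont A 0" "isCont B 0" "r > 0"
    "\<And>t. 0 < norm t \<Longrightarrow> norm t < r \<Longrightarrow> A t = B t"
  shows "A 0 = B 0"
proof -
  have ev: "eventually (\<lambda>t. A t = B t) (at 0)"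
    unfolding eventually_at using assms(3,4) by (auto intro!: exI[of _ r] simp: dist_norm)
  have "(A \<longlongrightarrow> A 0) (at 0)" using assms(1) by (simp add: isCont_def)
  hence "(B \<longlongrightarrow> A 0) (at 0)" using ev by (rule Lim_transform_eventually)
  moreover have "(B \<longlongrightarrow> B 0) (at 0)" using assms(2) by (simp add: isCont_def)
  ultimately show ?thesis by (intro tendsto_unique) auto
qed

lemma powser_facts:
  fixes K :: "nat \<Rightarrow> complex^3"
  assumes r: "r > 0"
  and conv: "\<forall>t. 0 < norm t \<and> norm t < r \<longrightarrow> summable (\<lambda>j. (t ^ j) *s K j)"
  shows "\<And>t. norm t < r \<Longrightarrow> summable (\<lambda>j. K j $ i * t ^ j)"
    and "\<And>t. 0 < norm t \<Longrightarrow> norm t < r \<Longrightarrow> (\<Sum>j. (t ^ j) *s K j) $ i = (\<Sum>j. K j $ i * t ^ j)"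
    and "\<And>t. norm t < r \<Longrightarrow> ((\<lambda>t. \<Sum>j. K j $ i * t ^ j) has_field_derivative (\<Sum>j. diffs (\<lambda>j. K j $ i) j * t ^ j)) (at t)"
    and "isCont (\<lambda>t. \<Sum>j. K j $ i * t ^ j) 0"
    and "isCont (\<lambda>t. \<Sum>j. diffs (\<lambda>j. K j $ i) j * t ^ j) 0"
    and "(\<Sum>j. K j $ i * 0 ^ j) = K 0 $ i"
proof -
  show sm: "summable (\<lambda>j. K j $ i * t ^ j)" if "norm t < r" for t
  proof (cases "t = 0")
    case True thus ?thesis by simp
  next
    case False
    hence "summable (\<lambda>j. (t ^ j) *s K j)" using conv that by auto
    from bounded_linear.summable[OF bounded_linear_vec_nth[of i] this]
    show ?thesis by (simp add: mult.commute)
  qed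
  show "(\<Sum>j. (t ^ j) *s K j) $ i = (\<Sum>j. K j $ i * t ^ j)" if "0 < norm t" "norm t < r" for t
  proof -
    have "summable (\<lambda>j. (t ^ j) *s K j)" using conv that by auto
    from bounded_linear.suminf[OF bounded_linear_vec_nth[of i] this]
    show ?thesis by (simp add: mult.commute)
  qed
  show "((\<lambda>t. \<Sum>j. K j $ i * t ^ j) has_field_derivative (\<Sum>j. diffs (\<lambda>j. K j $ i) j * t ^ j)) (at t)"
    if "norm t < r" for t
    by (rule termdiffs_strong'[of r]) (use sm that in auto)
  have r2: "norm (complex_of_real (r/2)) < r" using r by simp
  show "isCont (\<lambda>t. \<Sum>j. K j $ i * t ^ j) 0"
    by (rule isCont_powser[OF sm[OF r2]]) (use r in simp)
  have "summable (\<lambda>j. diffs (\<lambda>j. K j $ i) j * complex_of_real (r/2) ^ j)"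
    by (rule termdiff_converges[of _ r]) (use sm r2 in auto)
  thus "isCont (\<lambda>t. \<Sum>j. diffs (\<lambda>j. K j $ i) j * t ^ j) 0"
    by (rule isCont_powser) (use r in simp)
  show "(\<Sum>j. K j $ i * 0 ^ j) = K 0 $ i"
    using powser_zero[of "\<lambda>j. K j $ i"] by simp
qed

lemma KL: assumes "- K = cvcross K (omega m c K)" shows "K = 0"
proof -
  have e: "\<And>i. (- K) $ i = cvcross K (omega m c K) $ i" using assms by simp
  have "K $ 3 = 0" using e[of 3] by (simp add: cvcross_def omega_def)
  moreover have "K $ 1 = 0" using e[of 1] \<open>K $ 3 = 0\<close> by (simp add: cvcross_def omega_def)
  moreover have "K $ 2 = 0" using e[of 2] \<open>K $ 3 = 0\<close> by (simp add: cvcross_def omega_def)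
  ultimately show ?thesis by (simp add: vec_eq_iff forall_3)
qed

lemma PL: fixes a :: "real^3" and n :: nat
  assumes "cvcross P (cvec a) = 0" "(- of_nat n) *s P = cvcross P w" "n \<ge> 1" "a \<noteq> 0"
  shows "P = 0"
proof -
  define p1 where "p1 = P $ 1" define p2 where "p2 = P $ 2" define p3 where "p3 = P $ 3"
  define w1 where "w1 = w $ 1" define w2 where "w2 = w $ 2" define w3 where "w3 = w $ 3"
  define a1 where "a1 = complex_of_real (a $ 1)" define a2 where "a2 = complex_of_real (a $ 2)"
  define a3 where "a3 = complex_of_real (a $ 3)"
  have c1: "p2 * a3 - p3 * a2 = 0" "p3 * a1 - p1 * a3 = 0" "p1 * a2 - p2 * a1 = 0"
    using assms(1) unfolding vec_eq_iff
    by (auto simp: cvcross_def cvec_def p1_def p2_def p3_def a1_def a2_def a3_def dest: spec[of _ 1] spec[of _ 2] spec[of _ 3])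
  have c2: "- of_nat n * p1 = p2 * w3 - p3 * w2" "- of_nat n * p2 = p3 * w1 - p1 * w3"
     "- of_nat n * p3 = p1 * w2 - p2 * w1"
    using assms(2) unfolding vec_eq_iff
    by (auto simp: cvcross_def p1_def p2_def p3_def w1_def w2_def w3_def dest: spec[of _ 1] spec[of _ 2] spec[of _ 3])
  have "of_nat n * (a1 * p1 + a2 * p2 + a3 * p3) = 
     - (a1 * (- of_nat n * p1) + a2 * (- of_nat n * p2) + a3 * (- of_nat n * p3))"
    by (simp add: algebra_simps)
  also have "\<dots> = - (a1 * (p2 * w3 - p3 * w2) + a2 * (p3 * w1 - p1 * w3) + a3 * (p1 * w2 - p2 * w1))"
    using c2 by simp
  also have "\<dots> = w1 * (p2 * a3 - p3 * a2) + w2 * (p3 * a1 - p1 * a3) + w3 * (p1 * a2 - p2 * a1)"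
    by (simp add: algebra_simps)
  also have "\<dots> = 0" using c1 by simp
  finally have d: "a1 * p1 + a2 * p2 + a3 * p3 = 0" using assms(3) by simp
  define s where "s = a1 * a1 + a2 * a2 + a3 * a3"
  have "s \<noteq> 0"
  proof
    assume "s = 0"
    hence "(a $ 1)^2 + (a $ 2)^2 + (a $ 3)^2 = 0"
      unfolding s_def a1_def a2_def a3_def power2_eq_square
      by (metis of_real_add of_real_eq_0_iff of_real_mult)
    hence "a $ 1 = 0" "a $ 2 = 0" "a $ 3 = 0" by (simp_all add: sum_power2_eq_zero_iff add_nonneg_eq_0_iff)
    hence "a = 0" by (simp add: vec_eq_iff forall_3)
    with assms(4) show False by simp
  qed
  have "p1 * s = a1 * (a1 * p1 + a2 * p2 + a3 * p3) + a2 * (p1 * a2 - p2 * a1) - a3 * (p3 * a1 - p1 * a3)"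
    "p2 * s = a2 * (a1 * p1 + a2 * p2 + a3 * p3) + a3 * (p2 * a3 - p3 * a2) - a1 * (p1 * a2 - p2 * a1)"
    "p3 * s = a3 * (a1 * p1 + a2 * p2 + a3 * p3) + a1 * (p3 * a1 - p1 * a3) - a2 * (p2 * a3 - p3 * a2)"
    unfolding s_def by (simp_all add: algebra_simps)
  hence "p1 * s = 0" "p2 * s = 0" "p3 * s = 0" using c1 d by simp_all
  hence "p1 = 0" "p2 = 0" "p3 = 0" using \<open>s \<noteq> 0\<close> by simp_all
  thus ?thesis by (simp add: vec_eq_iff forall_3 p1_def p2_def p3_def)
qed

lemma inv_pow_deriv: "t \<noteq> (0::complex) \<Longrightarrow> ((\<lambda>s. inverse (s^n)) has_field_derivative (- of_nat n * inverse (t^(n+1)))) (at t)"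
  apply (rule derivative_eq_intros refl | simp)+
  apply (cases n)
   apply (auto simp: field_simps)
  done

lemma laurent_deriv:
  fixes K :: "nat \<Rightarrow> complex^3"
  assumes r: "r > 0"
  and conv: "\<forall>t. 0 < norm t \<and> norm t < r \<longrightarrow> summable (\<lambda>j. (t ^ j) *s K j)"
  and t: "0 < norm t" "norm t < r"
  shows "((\<lambda>s. laurent n K s $ i) has_field_derivative
     (- of_nat n * inverse (t ^ (n + 1)) * (\<Sum>j. K j $ i * t ^ j)
      + (\<Sum>j. diffs (\<lambda>j. K j $ i) j * t ^ j) * inverse (t ^ n))) (at t)"
proof -
  note pf = powser_facts[OF r conv, where i = i]
  have t0: "t \<noteq> 0" using t by auto
  have D: "((\<lambda>s. inverse (s ^ n) * (\<Sum>j. K j $ i * s ^ j)) has_field_derivative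
     (- of_nat n * inverse (t ^ (n + 1)) * (\<Sum>j. K j $ i * t ^ j)
      + (\<Sum>j. diffs (\<lambda>j. K j $ i) j * t ^ j) * inverse (t ^ n))) (at t)"
  proof -
    have d1: "((\<lambda>s. inverse (s^n)) has_field_derivative (- of_nat n * inverse (t^(n+1)))) (at t)"
      by (rule inv_pow_deriv[OF t0])
    show ?thesis
      by (rule DERIV_mult[OF d1 pf(3)[OF t(2)]])
  qed
  show ?thesis
  proof (rule has_field_derivative_transform_within_open[OF D, of "ball (0::complex) r - {0}"])
    show "open (ball 0 r - {0})" by auto
    show "t \<in> ball 0 r - {0}" using t by auto
    fix s :: complex assume s: "s \<in> ball 0 r - {0}"
    hence "0 < norm s" "norm s < r" by auto
    thus "inverse (s ^ n) * (\<Sum>j. K j $ i * s ^ j) = laurent n K s $ i"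
      by (simp add: laurent_def pf(2) power_int_minus)
  qed
qed

lemma pw: "t \<noteq> (0::complex) \<Longrightarrow> N = M + n \<Longrightarrow> t ^ N * inverse (t ^ n) = t ^ M"
  by (simp add: power_add)

theorem lemma1:
  fixes k c m :: real and a :: "real^3"
    and n1 n2 :: nat and K P :: "nat \<Rightarrow> complex^3" and r :: real
  assumes hk: "k \<in> {0, 1, -1}"
    and hc: "c \<noteq> 0" and hm: "m \<ge> 0"
    and hn1: "n1 \<ge> 1" and hn2: "n2 \<ge> 1"
    and hK0: "K 0 \<noteq> 0" and hP0: "P 0 \<noteq> 0"
    and hr: "r > 0"
    and hconv: "\<forall>t. 0 < norm t \<and> norm t < r \<longrightarrow>
                   summable (\<lambda>j. (t ^ j) *s K j) \<and> summable (\<lambda>j. (t ^ j) *s P j)"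
    and hodeK: "\<forall>t. 0 < norm t \<and> norm t < r \<longrightarrow> (\<forall>i.
       ((\<lambda>s. laurent n1 K s $ i) has_field_derivative
          (cvcross (laurent n1 K t) (omega m c (laurent n1 K t))
           + cvcross (laurent n2 P t) (cvec a)) $ i) (at t))"
    and hodeP: "\<forall>t. 0 < norm t \<and> norm t < r \<longrightarrow> (\<forall>i.
       ((\<lambda>s. laurent n2 P s $ i) has_field_derivative
          (cvcross (laurent n2 P t) (omega m c (laurent n1 K t))
           + complex_of_real k *s cvcross (laurent n1 K t) (cvec a)) $ i) (at t))"
    and hnd: "cvcross (omega m c (K 0)) (P 0) \<noteq> 0"
  shows "n1 = 1 \<and> n2 = 2"
proof -
  have convK: "\<forall>t. 0 < norm t \<and> norm t < r \<longrightarrow> summable (\<lambda>j. (t ^ j) *s K j)"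
    using hconv by auto
  have convP: "\<forall>t. 0 < norm t \<and> norm t < r \<longrightarrow> summable (\<lambda>j. (t ^ j) *s P j)"
    using hconv by auto
  define F where "F = (\<lambda>t. \<chi> i. \<Sum>j. K j $ i * t ^ j)"
  define F' where "F' = (\<lambda>t. \<chi> i. \<Sum>j. diffs (\<lambda>j. K j $ i) j * t ^ j)"
  define G where "G = (\<lambda>t. \<chi> i. \<Sum>j. P j $ i * t ^ j)"
  define G' where "G' = (\<lambda>t. \<chi> i. \<Sum>j. diffs (\<lambda>j. P j $ i) j * t ^ j)"
  note pK = powser_facts[OF hr convK]
  note pP = powser_facts[OF hr convP]
  have LK: "laurent n1 K t = inverse (t ^ n1) *s F t" if "0 < norm t" "norm t < r" for t
    using that by (simp add: vec_eq_iff laurent_def F_def pK(2) power_int_minus)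
  have LP: "laurent n2 P t = inverse (t ^ n2) *s G t" if "0 < norm t" "norm t < r" for t
    using that by (simp add: vec_eq_iff laurent_def G_def pP(2) power_int_minus)
  have cF: "isCont F 0" unfolding F_def by (rule vec_isCont) (simp add: pK(4))
  have cF': "isCont F' 0" unfolding F'_def by (rule vec_isCont) (simp add: pK(5))
  have cG: "isCont G 0" unfolding G_def by (rule vec_isCont) (simp add: pP(4))
  have cG': "isCont G' 0" unfolding G'_def by (rule vec_isCont) (simp add: pP(5))
  have F0: "F 0 = K 0" unfolding F_def vec_eq_iff using pK(6) by simp
  have G0: "G 0 = P 0" unfolding G_def vec_eq_iff using pP(6) by simp
  have EK: "(- of_nat n1 * inverse (t ^ (n1 + 1))) *s F t + inverse (t ^ n1) *s F' t
     = (inverse (t ^ n1) * inverse (t ^ n1)) *s cvcross (F t) (omega m c (F t))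
       + inverse (t ^ n2) *s cvcross (G t) (cvec a)" if t: "0 < norm t" "norm t < r" for t
  proof -
    have "(- of_nat n1 * inverse (t ^ (n1 + 1))) *s F t + inverse (t ^ n1) *s F' t
      = cvcross (laurent n1 K t) (omega m c (laurent n1 K t)) + cvcross (laurent n2 P t) (cvec a)"
    proof (subst vec_eq_iff, intro allI)
      fix i
      note d1 = laurent_deriv[OF hr convK t, where i = i and n = n1]
      have d2: "((\<lambda>s. laurent n1 K s $ i) has_field_derivative
          (cvcross (laurent n1 K t) (omega m c (laurent n1 K t))
           + cvcross (laurent n2 P t) (cvec a)) $ i) (at t)" using hodeK t by blast
      show "((- of_nat n1 * inverse (t ^ (n1 + 1))) *s F t + inverse (t ^ n1) *s F' t) $ i =
         (cvcross (laurent n1 K t) (omega m c (laurent n1 K t)) + cvcross (laurent n2 P t) (cvec a)) $ i"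
        using DERIV_unique[OF d1 d2] by (simp add: F_def F'_def mult.commute)
    qed
    also have "\<dots> = (inverse (t ^ n1) * inverse (t ^ n1)) *s cvcross (F t) (omega m c (F t))
       + inverse (t ^ n2) *s cvcross (G t) (cvec a)"
      unfolding LK[OF t] LP[OF t] cvcross_smult_left cvcross_smult_right omega_smult vector_smult_assoc ..
    finally show ?thesis .
  qed
  have EP: "(- of_nat n2 * inverse (t ^ (n2 + 1))) *s G t + inverse (t ^ n2) *s G' t
     = (inverse (t ^ n1) * inverse (t ^ n2)) *s cvcross (G t) (omega m c (F t))
       + (complex_of_real k * inverse (t ^ n1)) *s cvcross (F t) (cvec a)" if t: "0 < norm t" "norm t < r" for t
  proof -
    have "(- of_nat n2 * inverse (t ^ (n2 + 1))) *s G t + inverse (t ^ n2) *s G' t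
      = cvcross (laurent n2 P t) (omega m c (laurent n1 K t)) + complex_of_real k *s cvcross (laurent n1 K t) (cvec a)"
    proof (subst vec_eq_iff, intro allI)
      fix i
      note d1 = laurent_deriv[OF hr convP t, where i = i and n = n2]
      have d2: "((\<lambda>s. laurent n2 P s $ i) has_field_derivative
          (cvcross (laurent n2 P t) (omega m c (laurent n1 K t))
           + complex_of_real k *s cvcross (laurent n1 K t) (cvec a)) $ i) (at t)" using hodeP t by blast
      show "((- of_nat n2 * inverse (t ^ (n2 + 1))) *s G t + inverse (t ^ n2) *s G' t) $ i =
         (cvcross (laurent n2 P t) (omega m c (laurent n1 K t)) + complex_of_real k *s cvcross (laurent n1 K t) (cvec a)) $ i"
        using DERIV_unique[OF d1 d2] by (simp add: G_def G'_def mult.commute)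
    qed
    also have "\<dots> = (inverse (t ^ n1) * inverse (t ^ n2)) *s cvcross (G t) (omega m c (F t))
       + (complex_of_real k * inverse (t ^ n1)) *s cvcross (F t) (cvec a)"
      unfolding LK[OF t] LP[OF t] cvcross_smult_left cvcross_smult_right omega_smult vector_smult_assoc ..
    finally show ?thesis .
  qed
  obtain p where n1p: "n1 = Suc p" using hn1 by (cases n1) auto
  have S1: "(- of_nat n2 * t ^ p) *s G t + t ^ n1 *s G' t
     = cvcross (G t) (omega m c (F t)) + (complex_of_real k * t ^ n2) *s cvcross (F t) (cvec a)"
    if t: "0 < norm t" "norm t < r" for t
  proof -
    have t0: "t \<noteq> 0" using t by auto
    have c1: "t ^ (n1 + n2) * (- of_nat n2 * inverse (t ^ (n2 + 1))) = - of_nat n2 * t ^ p"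
      using pw[OF t0, of "n1 + n2" p "n2 + 1"] n1p by (simp add: algebra_simps)
    have c2: "t ^ (n1 + n2) * inverse (t ^ n2) = t ^ n1"
      using pw[OF t0, of "n1 + n2" n1 n2] by simp
    have c3: "t ^ (n1 + n2) * (inverse (t ^ n1) * inverse (t ^ n2)) = 1"
      using t0 by (simp add: power_add field_simps)
    have c4: "t ^ (n1 + n2) * (complex_of_real k * inverse (t ^ n1)) = complex_of_real k * t ^ n2"
      using pw[OF t0, of "n1 + n2" n2 n1] by (simp add: algebra_simps)
    have "t ^ (n1 + n2) *s ((- of_nat n2 * inverse (t ^ (n2 + 1))) *s G t + inverse (t ^ n2) *s G' t)
      = t ^ (n1 + n2) *s ((inverse (t ^ n1) * inverse (t ^ n2)) *s cvcross (G t) (omega m c (F t))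
       + (complex_of_real k * inverse (t ^ n1)) *s cvcross (F t) (cvec a))"
      using EP[OF t] by simp
    thus ?thesis unfolding vector_add_ldistrib vector_smult_assoc c1 c2 c3 c4 vector_smult_lid .
  qed
  have L1: "(- of_nat n2 * 0 ^ p) *s G 0 + 0 ^ n1 *s G' 0
     = cvcross (G 0) (omega m c (F 0)) + (complex_of_real k * 0 ^ n2) *s cvcross (F 0) (cvec a)"
    by (rule lim_eq[OF _ _ hr S1]) (auto intro!: isCont_smult isCont_cvcross isCont_omega continuous_intros cF cF' cG cG')
  have p0: "p = 0"
  proof (rule ccontr)
    assume "p \<noteq> 0"
    hence "cvcross (P 0) (omega m c (K 0)) = 0" using L1 n1p hn2 F0 G0 by (simp add: power_0_left)
    hence "cvcross (omega m c (K 0)) (P 0) = 0" using cvcross_anti by (metis neg_equal_0_iff_equal)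
    with hnd show False by simp
  qed
  hence n1_1: "n1 = 1" using n1p by simp
  have eqP: "(- of_nat n2) *s P 0 = cvcross (P 0) (omega m c (K 0))"
    using L1 n1p p0 hn2 F0 G0 by (simp add: power_0_left)
  have S2: "(- 1) *s F t + t *s F' t
     = cvcross (F t) (omega m c (F t)) + (t ^ 2 * inverse (t ^ n2)) *s cvcross (G t) (cvec a)"
    if t: "0 < norm t" "norm t < r" for t
  proof -
    have t0: "t \<noteq> 0" using t by auto
    have c1: "t ^ 2 * (- of_nat n1 * inverse (t ^ (n1 + 1))) = - 1"
      using n1_1 t0 by (simp add: power2_eq_square field_simps)
    have c2: "t ^ 2 * inverse (t ^ n1) = t"
      using n1_1 t0 by (simp add: power2_eq_square field_simps)
    have c3: "t ^ 2 * (inverse (t ^ n1) * inverse (t ^ n1)) = 1"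
      using n1_1 t0 by (simp add: power2_eq_square field_simps)
    have "t ^ 2 *s ((- of_nat n1 * inverse (t ^ (n1 + 1))) *s F t + inverse (t ^ n1) *s F' t)
      = t ^ 2 *s ((inverse (t ^ n1) * inverse (t ^ n1)) *s cvcross (F t) (omega m c (F t))
       + inverse (t ^ n2) *s cvcross (G t) (cvec a))"
      using EK[OF t] by simp
    thus ?thesis unfolding vector_add_ldistrib vector_smult_assoc c1 c2 c3 vector_smult_lid .
  qed
  have a0: "a \<noteq> 0"
  proof
    assume a: "a = 0"
    have S2': "(- 1) *s F t + t *s F' t = cvcross (F t) (omega m c (F t))"
      if t: "0 < norm t" "norm t < r" for t
      using S2[OF t] a by (simp add: cvcross_zero)
    have "(- 1) *s F 0 + 0 *s F' 0 = cvcross (F 0) (omega m c (F 0))"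
      by (rule lim_eq[OF _ _ hr S2']) (auto intro!: isCont_smult isCont_cvcross isCont_omega continuous_intros cF cF')
    hence "- K 0 = cvcross (K 0) (omega m c (K 0))" using F0 by (simp add: vec_eq_iff)
    hence "K 0 = 0" by (rule KL)
    with hK0 show False by simp
  qed
  have n2_ne1: "n2 \<noteq> 1"
  proof
    assume n2: "n2 = 1"
    have S2': "(- 1) *s F t + t *s F' t = cvcross (F t) (omega m c (F t)) + t *s cvcross (G t) (cvec a)"
      if t: "0 < norm t" "norm t < r" for t
    proof -
      have "t ^ 2 * inverse (t ^ n2) = t" using t n2 by (simp add: power2_eq_square)
      thus ?thesis using S2[OF t] by simp
    qed
    have "(- 1) *s F 0 + 0 *s F' 0 = cvcross (F 0) (omega m c (F 0)) + 0 *s cvcross (G 0) (cvec a)"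
      by (rule lim_eq[OF _ _ hr S2']) (auto intro!: isCont_smult isCont_cvcross isCont_omega continuous_intros cF cF' cG)
    hence "- K 0 = cvcross (K 0) (omega m c (K 0))" using F0 by (simp add: vec_eq_iff)
    hence "K 0 = 0" by (rule KL)
    with hK0 show False by simp
  qed
  have n2_2: "n2 = 2"
  proof (rule ccontr)
    assume "n2 \<noteq> 2"
    with n2_ne1 hn2 obtain q where n2q: "n2 = Suc (Suc q)" and q: "q \<ge> 1"
      by (cases n2; cases "n2 - 1"; auto)
    have S3: "(- (t ^ q)) *s F t + t ^ Suc q *s F' t
       = t ^ q *s cvcross (F t) (omega m c (F t)) + cvcross (G t) (cvec a)"
      if t: "0 < norm t" "norm t < r" for t
    proof -
      have t0: "t \<noteq> 0" using t by auto
      have c1: "t ^ n2 * (- of_nat n1 * inverse (t ^ (n1 + 1))) = - (t ^ q)"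
        using n1_1 n2q t0 by (simp add: field_simps)
      have c2: "t ^ n2 * inverse (t ^ n1) = t ^ Suc q"
        using pw[OF t0, of n2 "Suc q" 1] n1_1 n2q by simp
      have c3: "t ^ n2 * (inverse (t ^ n1) * inverse (t ^ n1)) = t ^ q"
        using pw[OF t0, of n2 q 2] n1_1 n2q by (simp add: power2_eq_square)
      have c4: "t ^ n2 * inverse (t ^ n2) = 1" using t0 by simp
      have "t ^ n2 *s ((- of_nat n1 * inverse (t ^ (n1 + 1))) *s F t + inverse (t ^ n1) *s F' t)
        = t ^ n2 *s ((inverse (t ^ n1) * inverse (t ^ n1)) *s cvcross (F t) (omega m c (F t))
         + inverse (t ^ n2) *s cvcross (G t) (cvec a))"
        using EK[OF t] by simp
      thus ?thesis unfolding vector_add_ldistrib vector_smult_assoc c1 c2 c3 c4 vector_smult_lid .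
    qed
    have "(- (0 ^ q)) *s F 0 + 0 ^ Suc q *s F' 0
       = 0 ^ q *s cvcross (F 0) (omega m c (F 0)) + cvcross (G 0) (cvec a)"
      by (rule lim_eq[OF _ _ hr S3]) (auto intro!: isCont_smult isCont_cvcross isCont_omega continuous_intros cF cF' cG)
    hence "cvcross (P 0) (cvec a) = 0" using q G0 by (simp add: power_0_left)
    from PL[OF this eqP hn2 a0] hP0 show False by simp
  qed
  show ?thesis using n1_1 n2_2 by simp
qed

end
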